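(* If $X$ and $Y$ are weakly Alster spaces, then $X\times Y$ is weakly Alster.
   Context: All spaces are infinite ${\sf T}_1$ topological spaces. For a space $Z$, $\mathcal{G}_K$ is the family of all collections $\mathcal{U}$ of ${\sf G}_\delta$ subsets of $Z$ with $Z\notin\mathcal{U}$ such that each compact subset of $Z$ is contained in some member of $\mathcal{U}$. $Z$ is weakly Alster if every member of $\mathcal{G}_K$ (for $Z$) has a countable subcollection whose union is dense in $Z$. *)

theory Defs
  imports "HOL-Analysis.Analysis"
begin

definition GK_covers :: "'a topology \<Rightarrow> 'a set set set" where
  "GK_covers Z = {\<U>. (\<forall>U\<in>\<U>. gdelta_in Z U) \<and> topspace Z \<notin> \<U> \<and>
                      (\<forall>K. compactin Z K \<longrightarrow> (\<exists>U\<in>\<U>. K \<subseteq> U))}"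

definition weakly_Alster :: "'a topology \<Rightarrow> bool" where
  "weakly_Alster Z \<longleftrightarrow>
     (\<forall>\<U>\<in>GK_covers Z. \<exists>\<V>. \<V> \<subseteq> \<U> \<and> countable \<V> \<and> Z closure_of (\<Union>\<V>) = topspace Z)"

end

theory Submission
  imports Defs
begin

lemma gdelta_rect:
  assumes K: "compactin X K" and L: "compactin Y L"
    and G: "gdelta_in (prod_topology X Y) G" and KL: "K \<times> L \<subseteq> G"
  shows "\<exists>A B. gdelta_in X A \<and> gdelta_in Y B \<and> K \<subseteq> A \<and> L \<subseteq> B \<and> A \<times> B \<subseteq> G"
proof -
  obtain \<W> where cW: "countable \<W>" and oW: "\<And>W. W \<in> \<W> \<Longrightarrow> openin (prod_topology X Y) W"
    and GW: "G = \<Inter>\<W>" and Gsub: "G \<subseteq> topspace X \<times> topspace Y"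
    using G unfolding gdelta_in_alt intersection_of_def by auto
  have "\<forall>W\<in>\<W>. \<exists>U V. openin X U \<and> openin Y V \<and> K \<subseteq> U \<and> L \<subseteq> V \<and> U \<times> V \<subseteq> W"
  proof
    fix W assume "W \<in> \<W>"
    then have "K \<times> L \<subseteq> W" using KL GW by auto
    then show "\<exists>U V. openin X U \<and> openin Y V \<and> K \<subseteq> U \<and> L \<subseteq> V \<and> U \<times> V \<subseteq> W"
      using Wallace_theorem_prod_topology[OF K L oW[OF \<open>W \<in> \<W>\<close>]] by metis
  qed
  then obtain U V where UV: "\<And>W. W \<in> \<W> \<Longrightarrow> openin X (U W) \<and> openin Y (V W) \<and> K \<subseteq> U W \<and> L \<subseteq> V W \<and> U W \<times> V W \<subseteq> W"
    by metis
  define A where "A = \<Inter>(insert (topspace X) (U ` \<W>))"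
  define B where "B = \<Inter>(insert (topspace Y) (V ` \<W>))"
  have "gdelta_in X A" unfolding A_def
    using cW UV by (intro gdelta_in_Inter) (auto intro: open_imp_gdelta_in)
  moreover have "gdelta_in Y B" unfolding B_def
    using cW UV by (intro gdelta_in_Inter) (auto intro: open_imp_gdelta_in)
  moreover have "K \<subseteq> A" using UV compactin_subset_topspace[OF K] unfolding A_def by auto
  moreover have "L \<subseteq> B" using UV compactin_subset_topspace[OF L] unfolding B_def by auto
  moreover have "A \<times> B \<subseteq> G"
  proof
    fix p assume p: "p \<in> A \<times> B"
    then obtain x y where pxy: "p = (x,y)" by auto
    have "p \<in> W" if "W \<in> \<W>" for W
      using p UV[OF that] that unfolding A_def B_def pxy by blast
    then show "p \<in> G" using GW by auto
  qed
  ultimately show ?thesis by blast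
qed

theorem theorem5p11:
  fixes X :: "'a topology" and Y :: "'b topology"
  assumes "t1_space X" and "infinite (topspace X)"
      and "t1_space Y" and "infinite (topspace Y)"
      and "weakly_Alster X" and "weakly_Alster Y"
  shows "weakly_Alster (prod_topology X Y)"
  unfolding weakly_Alster_def
proof
  fix \<U> assume "\<U> \<in> GK_covers (prod_topology X Y)"
  then have Ug: "\<And>U. U \<in> \<U> \<Longrightarrow> gdelta_in (prod_topology X Y) U"
    and Uc: "\<And>K. compactin (prod_topology X Y) K \<Longrightarrow> \<exists>U\<in>\<U>. K \<subseteq> U"
    unfolding GK_covers_def by auto
  have "\<forall>K L. \<exists>U A B. compactin X K \<and> compactin Y L \<longrightarrow> U\<in>\<U> \<and> gdelta_in X A \<and> gdelta_in Y B \<and> K\<subseteq>A \<and> L\<subseteq>B \<and> A\<times>B \<subseteq> U"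
  proof (intro allI impI)
    fix K L
    show "\<exists>U A B. compactin X K \<and> compactin Y L \<longrightarrow> U\<in>\<U> \<and> gdelta_in X A \<and> gdelta_in Y B \<and> K\<subseteq>A \<and> L\<subseteq>B \<and> A\<times>B \<subseteq> U"
    proof (cases "compactin X K \<and> compactin Y L")
      case True
      then have "compactin (prod_topology X Y) (K \<times> L)" by (simp add: compactin_Times)
      then obtain U where "U \<in> \<U>" "K \<times> L \<subseteq> U" using Uc by blast
      then show ?thesis using gdelta_rect[of X K Y L U] True Ug by blast
    qed auto
  qed
  then obtain u a b where uab: "\<And>K L. compactin X K \<Longrightarrow> compactin Y L \<Longrightarrow>
     u K L \<in> \<U> \<and> gdelta_in X (a K L) \<and> gdelta_in Y (b K L) \<and> K \<subseteq> a K L \<and> L \<subseteq> b K L \<and> a K L \<times> b K L \<subseteq> u K L"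
    by metis
  have "\<forall>L. \<exists>\<K>. compactin Y L \<longrightarrow> countable \<K> \<and> \<K> \<subseteq> {K. compactin X K} \<and>
        X closure_of (\<Union>K\<in>\<K>. a K L) = topspace X"
  proof (intro allI impI)
    fix L
    show "\<exists>\<K>. compactin Y L \<longrightarrow> countable \<K> \<and> \<K> \<subseteq> {K. compactin X K} \<and>
        X closure_of (\<Union>K\<in>\<K>. a K L) = topspace X"
    proof (cases "compactin Y L")
      case True
      define F where "F = (\<lambda>K. a K L) ` {K. compactin X K}"
      show ?thesis
      proof (cases "topspace X \<in> F")
        case True
        then obtain K0 where "compactin X K0" "a K0 L = topspace X" unfolding F_def by auto
        then show ?thesis by (intro exI[of _ "{K0}"]) auto
      next
        case False
        have "F \<in> GK_covers X" unfolding GK_covers_def F_def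
          using False uab[OF _ True] unfolding F_def by blast
        then obtain \<V> where "\<V> \<subseteq> F" "countable \<V>" "X closure_of (\<Union>\<V>) = topspace X"
          using assms(5) unfolding weakly_Alster_def by blast
        moreover then obtain \<K> where "countable \<K>" "\<K> \<subseteq> {K. compactin X K}" "\<V> = (\<lambda>K. a K L) ` \<K>"
          using countable_subset_image[of \<V> "\<lambda>K. a K L" "{K. compactin X K}"] unfolding F_def by blast
        ultimately show ?thesis by auto
      qed
    qed auto
  qed
  then obtain kk where kk: "\<And>L. compactin Y L \<Longrightarrow> countable (kk L) \<and> kk L \<subseteq> {K. compactin X K} \<and>
        X closure_of (\<Union>K\<in>kk L. a K L) = topspace X"
    by metis
  define W where "W = (\<lambda>L. \<Inter>(insert (topspace Y) ((\<lambda>K. b K L) ` kk L)))"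
  have Wg: "gdelta_in Y (W L)" if "compactin Y L" for L
    unfolding W_def
    by (rule gdelta_in_Inter) (use kk[OF that] uab[OF _ that] in auto)
  have WL: "L \<subseteq> W L" if "compactin Y L" for L
    using kk[OF that] uab[OF _ that] compactin_subset_topspace[OF that] unfolding W_def by auto
  have "\<exists>\<L>. countable \<L> \<and> \<L> \<subseteq> {L. compactin Y L} \<and> Y closure_of (\<Union>(W ` \<L>)) = topspace Y"
  proof (cases "topspace Y \<in> W ` {L. compactin Y L}")
    case True
    then obtain L0 where "compactin Y L0" "W L0 = topspace Y" by auto
    then show ?thesis by (intro exI[of _ "{L0}"]) auto
  next
    case False
    have "W ` {L. compactin Y L} \<in> GK_covers Y" unfolding GK_covers_def
      using False Wg WL by blast
    then obtain \<V> where "\<V> \<subseteq> W ` {L. compactin Y L}" "countable \<V>" "Y closure_of (\<Union>\<V>) = topspace Y"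
      using assms(6) unfolding weakly_Alster_def by blast
    moreover then obtain \<L> where "countable \<L>" "\<L> \<subseteq> {L. compactin Y L}" "\<V> = W ` \<L>"
      using countable_subset_image[of \<V> W "{L. compactin Y L}"] by blast
    ultimately show ?thesis by auto
  qed
  then obtain \<L> where cL: "countable \<L>" and Lc: "\<L> \<subseteq> {L. compactin Y L}"
    and Ld: "Y closure_of (\<Union>(W ` \<L>)) = topspace Y" by blast
  define \<V> where "\<V> = (\<Union>L\<in>\<L>. (\<lambda>K. u K L) ` kk L)"
  show "\<exists>\<V>. \<V> \<subseteq> \<U> \<and> countable \<V> \<and> prod_topology X Y closure_of \<Union>\<V> = topspace (prod_topology X Y)"
  proof (intro exI conjI)
    show "\<V> \<subseteq> \<U>" unfolding \<V>_def using Lc kk uab by blast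
    show "countable \<V>" unfolding \<V>_def using cL Lc kk by (intro countable_UN) auto
    show "prod_topology X Y closure_of \<Union>\<V> = topspace (prod_topology X Y)"
      unfolding dense_intersects_open
    proof (intro allI impI)
      fix T assume T: "openin (prod_topology X Y) T \<and> T \<noteq> {}"
      then obtain x y where "(x,y) \<in> T" by auto
      then obtain Q P where OP: "openin X Q" "openin Y P" "x \<in> Q" "y \<in> P" "Q \<times> P \<subseteq> T"
        using T openin_prod_topology_alt by metis
      have "(\<Union>(W ` \<L>)) \<inter> P \<noteq> {}" using Ld OP unfolding dense_intersects_open by blast
      then obtain L y' where L: "L \<in> \<L>" "y' \<in> W L" "y' \<in> P" by auto
      have Lc': "compactin Y L" using L Lc by auto
      have "(\<Union>K\<in>kk L. a K L) \<inter> Q \<noteq> {}" using kk[OF Lc'] OP unfolding dense_intersects_open by blast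
      then obtain K x' where K: "K \<in> kk L" "x' \<in> a K L" "x' \<in> Q" by auto
      have Kc: "compactin X K" using K kk[OF Lc'] by auto
      have "y' \<in> b K L" using L K unfolding W_def by auto
      then have "(x',y') \<in> u K L" using uab[OF Kc Lc'] K by auto
      moreover have "u K L \<in> \<V>" unfolding \<V>_def using L K by auto
      moreover have "(x',y') \<in> T" using OP K L by auto
      ultimately show "\<Union>\<V> \<inter> T \<noteq> {}" by blast
    qed
  qed
qed

end
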